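(* Let $m>n>0$ and $c>0$ be constants. Let $f,g\in C(\mathbb{R}_0^+,\mathbb{R}_0^+)$, let $w\in C(\mathbb{R}_0^+,\mathbb{R}_0^+)$ be nondecreasing with $w(x)>0$ for $x>0$, and let $\alpha\in C^1(\mathbb{R}_0^+,\mathbb{R}_0^+)$ be nondecreasing with $\alpha(t)\le t$. If $u\in C(\mathbb{R}_0^+,\mathbb{R}_0^+)$ satisfies $$u^m(t)\le c^{m/(m-n)}+\frac{m}{m-n}\int_0^{\alpha(t)}\big[f(s)u^n(s)w(u(s))+g(s)u^n(s)\big]\,ds\qquad\text{for all }t\ge0,$$ then there exists $\tau>0$ such that for all $t\in[0,\tau]$, $$\Psi\Big(c+\int_0^{\alpha(t)}g(s)\,ds\Big)+\int_0^{\alpha(t)}f(s)\,ds\in\mathrm{Dom}(\Psi^{-1})$$ and $$u(t)\le\Big\{\Psi^{-1}\Big[\Psi\Big(c+\int_0^{\alpha(t)}g(s)\,ds\Big)+\int_0^{\alpha(t)}f(s)\,ds\Big]\Big\}^{1/(m-n)},$$ where $\Psi(x)=\int_1^x\frac{ds}{w(s^{1/(m-n)})}$ for $x>0$.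
   Context: $\mathbb{R}_0^+=[0,\infty)$. $\Psi$ is strictly increasing on $(0,\infty)$, $\Psi^{-1}$ denotes its inverse, and $\mathrm{Dom}(\Psi^{-1})=\Psi((0,\infty))$. *)

theory Defs
  imports "HOL-Analysis.Analysis"
begin

definition oint :: "real \<Rightarrow> real \<Rightarrow> (real \<Rightarrow> real) \<Rightarrow> real" where
  "oint a b h = (if a \<le> b then integral {a..b} h else - integral {b..a} h)"

definition Psi :: "(real \<Rightarrow> real) \<Rightarrow> real \<Rightarrow> real \<Rightarrow> real \<Rightarrow> real" where
  "Psi w m n x = oint 1 x (\<lambda>s. 1 / w (s powr (1 / (m - n))))"

definition Psi_inv :: "(real \<Rightarrow> real) \<Rightarrow> real \<Rightarrow> real \<Rightarrow> real \<Rightarrow> real" where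
  "Psi_inv w m n y = (THE x. x > 0 \<and> Psi w m n x = y)"

definition Psi_dom :: "(real \<Rightarrow> real) \<Rightarrow> real \<Rightarrow> real \<Rightarrow> real set" where
  "Psi_dom w m n = Psi w m n ` {0<..}"

end

theory Submission
  imports Defs
begin

lemma k_cont:
  fixes w :: "real \<Rightarrow> real" and m n :: real
  assumes w: "continuous_on {0..} w" "\<forall>x>0. w x > 0" and mn: "m > n"
  shows "continuous_on {0<..} (\<lambda>s. 1 / w (s powr (1/(m-n))))"
proof -
  have c1: "continuous_on {0<..} (\<lambda>s::real. s powr (1/(m-n)))"
    by (intro continuous_intros) auto
  have c2: "continuous_on {0<..} (\<lambda>s. w (s powr (1/(m-n))))"
    by (rule continuous_on_compose2[OF w(1) c1]) auto
  have "\<forall>s>0. w (s powr (1/(m-n))) > 0" using w(2) by auto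
  then show ?thesis
    using c2 by (intro continuous_intros) auto
qed

lemma ftc_at:
  fixes h :: "real \<Rightarrow> real"
  assumes "continuous_on {a..b} h" "a < x" "x < b"
  shows "((\<lambda>y. integral {a..y} h) has_real_derivative h x) (at x)"
  using integral_has_real_derivative[of a b h x] assms by (simp add: at_within_Icc_at)

lemma Psi_deriv:
  fixes w :: "real \<Rightarrow> real" and m n x :: real
  assumes w: "continuous_on {0..} w" "\<forall>x>0. w x > 0" and mn: "m > n" and x: "x > 0"
  shows "(Psi w m n has_real_derivative 1 / w (x powr (1/(m-n)))) (at x)"
proof -
  define k where "k = (\<lambda>s. 1 / w (s powr (1/(m-n))))"
  have kc: "continuous_on {0<..} k" unfolding k_def by (rule k_cont[OF w mn])
  define a where "a = min x 1 / 2"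
  define b where "b = max x 1 + 1"
  have a: "a > 0" "a < x" "a < 1" using x by (auto simp: a_def)
  have b: "b > x" "b > 1" by (auto simp: b_def)
  have int: "k integrable_on {a..y}" for y
    by (rule integrable_continuous_real, rule continuous_on_subset[OF kc]) (use a in auto)
  have eq: "Psi w m n y = integral {a..y} k - integral {a..1} k" if "y \<in> {a<..<b}" for y
  proof (cases "1 \<le> y")
    case True
    then show ?thesis
      using Henstock_Kurzweil_Integration.integral_combine[where f=k and a=a and c=1 and b=y] int[of y] a
      unfolding Psi_def oint_def k_def by auto
  next
    case False
    then show ?thesis
      using Henstock_Kurzweil_Integration.integral_combine[where f=k and a=a and c=y and b=1] int[of 1] a that
      unfolding Psi_def oint_def k_def by auto
  qed
  have d: "((\<lambda>y. integral {a..y} k) has_real_derivative k x) (at x)"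
  proof -
    have sub: "{a..b} \<subseteq> {0<..}" using a by auto
    show ?thesis using ftc_at[OF continuous_on_subset[OF kc sub]] a b by auto
  qed
  have d2: "((\<lambda>y. integral {a..y} k - integral {a..1} k) has_real_derivative k x) (at x)"
    using DERIV_diff[OF d DERIV_const[where k="integral {a..1} k"]] by simp
  show ?thesis
    using has_field_derivative_transform_within_open[OF d2, where S="{a<..<b}"] eq a b
    unfolding k_def by auto
qed

lemma Psi_strict:
  fixes w :: "real \<Rightarrow> real" and m n x y :: real
  assumes w: "continuous_on {0..} w" "\<forall>x>0. w x > 0" and mn: "m > n" and xy: "0 < x" "x < y"
  shows "Psi w m n x < Psi w m n y"
proof (rule DERIV_pos_imp_increasing[OF xy(2)])
  fix z assume "x \<le> z" "z \<le> y"
  then have z: "z > 0" using xy by auto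
  have "w (z powr (1/(m-n))) > 0" using w(2) z by auto
  then show "\<exists>y. DERIV (Psi w m n) z :> y \<and> y > 0"
    using Psi_deriv[OF w mn z] by auto
qed

lemma Psi_le_iff:
  fixes w :: "real \<Rightarrow> real" and m n x y :: real
  assumes w: "continuous_on {0..} w" "\<forall>x>0. w x > 0" and mn: "m > n" and xy: "0 < x" "0 < y"
  shows "Psi w m n x \<le> Psi w m n y \<longleftrightarrow> x \<le> y"
  using Psi_strict[OF w mn, of x y] Psi_strict[OF w mn, of y x] xy
  by (cases x y rule: linorder_cases) auto

lemma Psi_inv_eq:
  fixes w :: "real \<Rightarrow> real" and m n x :: real
  assumes w: "continuous_on {0..} w" "\<forall>x>0. w x > 0" and mn: "m > n" and x: "0 < x"
  shows "Psi_inv w m n (Psi w m n x) = x"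
  unfolding Psi_inv_def
proof (rule the_equality)
  show "0 < x \<and> Psi w m n x = Psi w m n x" using x by simp
  fix y assume "0 < y \<and> Psi w m n y = Psi w m n x"
  then show "y = x" using Psi_le_iff[OF w mn, of x y] Psi_le_iff[OF w mn, of y x] x by auto
qed

lemma Psi_cont:
  fixes w :: "real \<Rightarrow> real" and m n :: real
  assumes w: "continuous_on {0..} w" "\<forall>x>0. w x > 0" and mn: "m > n"
  shows "continuous_on {0<..} (Psi w m n)"
  by (rule continuous_at_imp_continuous_on) (use Psi_deriv[OF w mn] DERIV_isCont in auto)

lemma int_nn:
  fixes h :: "real \<Rightarrow> real"
  assumes "continuous_on {0..} h" "\<forall>s\<ge>0. h s \<ge> 0" "0 \<le> a"
  shows "0 \<le> integral {0..a} h"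
proof -
  have "h integrable_on {0..a}"
    by (rule integrable_continuous_real, rule continuous_on_subset[OF assms(1)]) auto
  then show ?thesis using assms by (intro Henstock_Kurzweil_Integration.integral_nonneg) auto
qed

lemma int_mono:
  fixes h :: "real \<Rightarrow> real"
  assumes "continuous_on {0..} h" "\<forall>s\<ge>0. h s \<ge> 0" "0 \<le> a" "a \<le> b"
  shows "integral {0..a} h \<le> integral {0..b} h"
proof -
  have i: "h integrable_on {0..b}"
    by (rule integrable_continuous_real, rule continuous_on_subset[OF assms(1)]) auto
  have i2: "h integrable_on {a..b}"
    by (rule integrable_continuous_real, rule continuous_on_subset[OF assms(1)]) (use assms in auto)
  have "0 \<le> integral {a..b} h"
    using assms i2 by (intro Henstock_Kurzweil_Integration.integral_nonneg) auto
  then show ?thesis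
    using Henstock_Kurzweil_Integration.integral_combine[where f=h and a=0 and c=a and b=b] i assms
    by auto
qed

theorem corollary1:
  fixes m n c :: real and f g w \<alpha> u :: "real \<Rightarrow> real"
  assumes mn: "m > n" "n > 0" and c: "c > 0"
    and f: "continuous_on {0..} f" "\<forall>t\<ge>0. f t \<ge> 0"
    and g: "continuous_on {0..} g" "\<forall>t\<ge>0. g t \<ge> 0"
    and w: "continuous_on {0..} w" "\<forall>t\<ge>0. w t \<ge> 0" "mono_on {0..} w"
           "\<forall>x>0. w x > 0"
    and \<alpha>: "\<exists>\<alpha>'. continuous_on {0..} \<alpha>' \<and>
              (\<forall>t\<ge>0. (\<alpha> has_real_derivative \<alpha>' t) (at t within {0..}))"
           "\<forall>t\<ge>0. \<alpha> t \<ge> 0" "mono_on {0..} \<alpha>" "\<forall>t\<ge>0. \<alpha> t \<le> t"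
    and u: "continuous_on {0..} u" "\<forall>t\<ge>0. u t \<ge> 0"
    and ineq: "\<forall>t\<ge>0. u t powr m \<le> c powr (m / (m - n)) + m / (m - n) *
                 integral {0..\<alpha> t} (\<lambda>s. f s * u s powr n * w (u s) + g s * u s powr n)"
  shows "\<exists>\<tau>>0. \<forall>t\<in>{0..\<tau>}.
           Psi w m n (c + integral {0..\<alpha> t} g) + integral {0..\<alpha> t} f \<in> Psi_dom w m n \<and>
           u t \<le> (Psi_inv w m n (Psi w m n (c + integral {0..\<alpha> t} g) + integral {0..\<alpha> t} f))
                   powr (1 / (m - n))"
proof -
  define h where "h = (\<lambda>s. f s * u s powr n * w (u s) + g s * u s powr n)"
  define v where "v = (\<lambda>s. c powr (m/(m-n)) + m/(m-n) * integral {0..s} h)"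
  define G where "G = (\<lambda>s. integral {0..s} g)"
  define F where "F = (\<lambda>s. integral {0..s} f)"
  define Wv where "Wv = (\<lambda>s. w (v s powr (1/m)))"
  define K where "K = (\<lambda>s. integral {0..s} (\<lambda>x. f x * Wv x))"
  define P where "P = (\<lambda>s. v s powr ((m-n)/m))"
  have mpos: "m > 0" "m - n > 0" using mn by auto
  have wc: "continuous_on {0..} (\<lambda>s. w (u s))"
    by (rule continuous_on_compose2[OF w(1) u(1)]) (use u(2) in auto)
  have upc: "continuous_on {0..} (\<lambda>s. u s powr n)"
    by (rule continuous_on_powr') (use u mn in \<open>auto intro: continuous_intros\<close>)
  have hc: "continuous_on {0..} h"
    unfolding h_def by (intro continuous_on_add continuous_on_mult f(1) g(1) wc upc)
  have hnn: "\<forall>s\<ge>0. h s \<ge> 0"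
    unfolding h_def using f(2) g(2) w(2) u(2) by auto
  have vpos: "v s > 0" if "s \<ge> 0" for s
  proof -
    have "0 \<le> integral {0..s} h" by (rule int_nn[OF hc hnn that])
    moreover have "c powr (m/(m-n)) > 0" using c by simp
    ultimately show ?thesis unfolding v_def using mpos by (simp add: add_pos_nonneg)
  qed
  have vmono: "v a \<le> v b" if "0 \<le> a" "a \<le> b" for a b
    unfolding v_def using int_mono[OF hc hnn that] mpos by (intro add_left_mono mult_left_mono) auto
  have uv: "u s powr m \<le> v s" if "s \<ge> 0" for s
  proof -
    have "u s powr m \<le> v (\<alpha> s)" using ineq that unfolding v_def h_def by auto
    also have "\<dots> \<le> v s" using vmono \<alpha>(2,4) that by auto
    finally show ?thesis .
  qed
  have uv2: "u s \<le> v s powr (1/m)" if "s \<ge> 0" for s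
  proof -
    have "u s = (u s powr m) powr (1/m)"
      using u(2) that mpos by (simp add: powr_powr powr_one)
    also have "\<dots> \<le> v s powr (1/m)" using uv[OF that] mpos by (intro powr_mono2) auto
    finally show ?thesis .
  qed
  have un: "u s powr n \<le> v s powr (n/m)" if "s \<ge> 0" for s
  proof -
    have "u s powr n \<le> (v s powr (1/m)) powr n"
      using uv2[OF that] u(2) that mn by (intro powr_mono2) auto
    also have "\<dots> = v s powr (n/m)" by (simp add: powr_powr)
    finally show ?thesis .
  qed
  have wu: "w (u s) \<le> Wv s" if "s \<ge> 0" for s
    unfolding Wv_def using uv2[OF that] u(2) that w(3) by (auto intro: mono_onD)
  have Wvnn: "Wv s \<ge> 0" if "s \<ge> 0" for s
    unfolding Wv_def using w(2) by auto
  have hle: "h s \<le> v s powr (n/m) * (f s * Wv s + g s)" if "s \<ge> 0" for s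
  proof -
    have "f s * u s powr n * w (u s) \<le> f s * v s powr (n/m) * Wv s"
      using f(2) un[OF that] wu[OF that] that w(2) u(2)
      by (intro mult_mono mult_left_mono) auto
    moreover have "g s * u s powr n \<le> g s * v s powr (n/m)"
      using g(2) un[OF that] that by (intro mult_left_mono) auto
    ultimately show ?thesis unfolding h_def by (simp add: algebra_simps)
  qed
  have main: "Psi w m n (P T) \<le> Psi w m n (c + G T) + F T" if T: "T \<ge> 0" for T
  proof -
    have hT: "continuous_on {0..T} h" by (rule continuous_on_subset[OF hc]) auto
    have vc: "continuous_on {0..T} v"
      unfolding v_def
      by (intro continuous_intros indefinite_integral_continuous_1 integrable_continuous_real hT)
    have vne: "\<forall>x\<in>{0..T}. v x \<noteq> 0" using vpos by (metis atLeastAtMost_iff less_irrefl)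
    have vr: "continuous_on {0..T} (\<lambda>s. v s powr (1/m))"
      by (intro continuous_on_powr vc continuous_on_const vne)
    have Wvc: "continuous_on {0..T} Wv"
      unfolding Wv_def
      by (rule continuous_on_compose2[OF w(1) vr]) auto
    have fWc: "continuous_on {0..T} (\<lambda>x. f x * Wv x)"
      using continuous_on_subset[OF f(1)] Wvc by (intro continuous_intros) auto
    have gT: "continuous_on {0..T} g" by (rule continuous_on_subset[OF g(1)]) auto
    have fT: "continuous_on {0..T} f" by (rule continuous_on_subset[OF f(1)]) auto
    have Kc: "continuous_on {0..T} K"
      unfolding K_def by (intro indefinite_integral_continuous_1 integrable_continuous_real fWc)
    have Gc: "continuous_on {0..T} G"
      unfolding G_def by (intro indefinite_integral_continuous_1 integrable_continuous_real gT)
    have Fc: "continuous_on {0..T} F"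
      unfolding F_def by (intro indefinite_integral_continuous_1 integrable_continuous_real fT)
    have Pc: "continuous_on {0..T} P"
      unfolding P_def by (intro continuous_on_powr vc continuous_on_const vne)
    have Knn: "K x \<ge> 0" if "0 \<le> x" "x \<le> T" for x
    proof -
      have "(\<lambda>x. f x * Wv x) integrable_on {0..x}"
        by (rule integrable_continuous_real, rule continuous_on_subset[OF fWc]) (use that in auto)
      then show ?thesis unfolding K_def using f(2) Wvnn
        by (intro Henstock_Kurzweil_Integration.integral_nonneg) auto
    qed
    have Gnn: "G x \<ge> 0" if "0 \<le> x" for x unfolding G_def by (rule int_nn[OF g that])
    have Fnn: "F x \<ge> 0" if "0 \<le> x" for x unfolding F_def by (rule int_nn[OF f that])
    have Gmono: "G x \<le> G T" if "0 \<le> x" "x \<le> T" for x unfolding G_def by (rule int_mono[OF g that])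
    have B: "P s \<le> c + G s + K s" if s: "0 \<le> s" "s \<le> T" for s
    proof -
      define \<phi> where "\<phi> = (\<lambda>x. P x - G x - K x)"
      have "\<phi> s \<le> \<phi> 0"
      proof (rule DERIV_nonpos_imp_decreasing_open[OF s(1)])
        show "continuous_on {0..s} \<phi>"
        proof -
          have sub: "{0..s} \<subseteq> {0..T}" using s by auto
          show ?thesis unfolding \<phi>_def
            by (intro continuous_on_diff continuous_on_subset[OF Pc sub] continuous_on_subset[OF Gc sub]
                  continuous_on_subset[OF Kc sub])
        qed
        fix x assume x: "0 < x" "x < s"
        have dv: "DERIV v x :> m/(m-n) * h x"
          unfolding v_def using ftc_at[OF hT, of x] x s mpos
          by (auto intro!: derivative_eq_intros)
        have dP: "DERIV P x :> ((m-n)/m * v x powr ((m-n)/m - 1)) * (m/(m-n) * h x)"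
        proof -
          have vx0: "v x > 0" using vpos x by auto
          show ?thesis
            using DERIV_chain2[OF has_real_derivative_powr[OF vx0, of "(m-n)/m"] dv] unfolding P_def
            by (simp only:)
        qed
        have dG: "DERIV G x :> g x" unfolding G_def using ftc_at[OF gT, of x] x s by auto
        have dK: "DERIV K x :> f x * Wv x" unfolding K_def using ftc_at[OF fWc, of x] x s by auto
        have d: "DERIV \<phi> x :> ((m-n)/m * v x powr ((m-n)/m - 1)) * (m/(m-n) * h x) - g x - f x * Wv x"
          unfolding \<phi>_def by (intro DERIV_diff dP dG dK)
        have vx: "v x > 0" using vpos x by auto
        have e1: "(m-n)/m * v x powr ((m-n)/m - 1) * (m/(m-n) * h x) = h x / v x powr (n/m)"
        proof -
          have r: "(m-n)/m - 1 = - (n/m)" using mpos by (simp add: field_simps)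
          have k1: "(m-n)/m * (m/(m-n)) = 1" using mpos by simp
          have "(m-n)/m * v x powr ((m-n)/m - 1) * (m/(m-n) * h x)
              = ((m-n)/m * (m/(m-n))) * (v x powr ((m-n)/m - 1) * h x)" by (simp only: ac_simps)
          also have "\<dots> = v x powr (-(n/m)) * h x" using k1 r by simp
          also have "\<dots> = h x / v x powr (n/m)" by (simp add: powr_minus_divide)
          finally show ?thesis .
        qed
        have "h x / v x powr (n/m) \<le> f x * Wv x + g x"
          using hle[of x] x vx by (simp add: divide_le_eq mult.commute)
        then have "((m-n)/m * v x powr ((m-n)/m - 1)) * (m/(m-n) * h x) - g x - f x * Wv x \<le> 0"
          using e1 by linarith
        then show "\<exists>y. DERIV \<phi> x :> y \<and> y \<le> 0" using d by blast
      qed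
      moreover have "\<phi> 0 = c"
        unfolding \<phi>_def P_def v_def G_def K_def using c mpos by (simp add: powr_powr)
      ultimately show ?thesis unfolding \<phi>_def by simp
    qed
    define R where "R = (\<lambda>x. c + G T + K x)"
    have Rpos: "R x > 0" if "0 \<le> x" "x \<le> T" for x
      unfolding R_def using Knn[OF that] Gnn[OF T] c by auto
    have PR: "P x \<le> R x" if "0 \<le> x" "x \<le> T" for x
      using B[OF that] Gmono[OF that] unfolding R_def by auto
    define \<psi> where "\<psi> = (\<lambda>x. Psi w m n (R x) - F x)"
    have "\<psi> T \<le> \<psi> 0"
    proof (rule DERIV_nonpos_imp_decreasing_open[OF T])
      have Rc: "continuous_on {0..T} R" unfolding R_def using Kc by (intro continuous_intros)
      have "continuous_on {0..T} (\<lambda>x. Psi w m n (R x))"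
        by (rule continuous_on_compose2[OF Psi_cont[OF w(1) w(4) mn(1)] Rc]) (use Rpos in auto)
      then show "continuous_on {0..T} \<psi>" unfolding \<psi>_def using Fc by (intro continuous_intros)
      fix x assume x: "0 < x" "x < T"
      have dK: "DERIV K x :> f x * Wv x" unfolding K_def using ftc_at[OF fWc, of x] x by auto
      have dR: "DERIV R x :> f x * Wv x" unfolding R_def using dK by (auto intro!: derivative_eq_intros)
      have dF: "DERIV F x :> f x" unfolding F_def using ftc_at[OF fT, of x] x by auto
      have Rx: "R x > 0" using Rpos x by auto
      have d: "DERIV \<psi> x :> 1 / w (R x powr (1/(m-n))) * (f x * Wv x) - f x"
        unfolding \<psi>_def
        by (intro DERIV_diff dF DERIV_chain2[OF Psi_deriv[OF w(1) w(4) mn(1) Rx] dR])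
      have wR: "w (R x powr (1/(m-n))) > 0" using w(4) Rx by auto
      have "v x powr (1/m) = P x powr (1/(m-n))"
        unfolding P_def using mpos by (simp add: powr_powr)
      also have "\<dots> \<le> R x powr (1/(m-n))"
        using PR[of x] x mpos unfolding P_def by (intro powr_mono2) auto
      finally have "Wv x \<le> w (R x powr (1/(m-n)))"
        unfolding Wv_def using w(3) Rx by (intro mono_onD[OF w(3)]) auto
      then have "f x * Wv x \<le> f x * w (R x powr (1/(m-n)))"
        using f(2) x by (intro mult_left_mono) auto
      then have "1 / w (R x powr (1/(m-n))) * (f x * Wv x) \<le> f x"
        using wR by (simp add: divide_le_eq mult.commute)
      then show "\<exists>y. DERIV \<psi> x :> y \<and> y \<le> 0" using d by (intro exI[of _ "1 / w (R x powr (1/(m-n))) * (f x * Wv x) - f x"]) auto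
    qed
    then have "Psi w m n (R T) \<le> Psi w m n (c + G T) + F T"
      unfolding \<psi>_def R_def K_def F_def by simp
    moreover have "Psi w m n (P T) \<le> Psi w m n (R T)"
      using Psi_le_iff[OF w(1) w(4) mn(1), of "P T" "R T"] PR[of T] Rpos[of T] T vpos[OF T]
      unfolding P_def by auto
    ultimately show ?thesis by linarith
  qed
  have uva: "u t \<le> v (\<alpha> t) powr (1/m)" if "t \<ge> 0" for t
  proof -
    have a: "u t powr m \<le> v (\<alpha> t)" using ineq that unfolding v_def h_def by auto
    have "u t = (u t powr m) powr (1/m)"
      using u(2) that mpos by (simp add: powr_powr powr_one)
    also have "\<dots> \<le> v (\<alpha> t) powr (1/m)" using a mpos by (intro powr_mono2) auto
    finally show ?thesis .
  qed
  define H where "H = (\<lambda>x. Psi w m n (c + G x) + F x)"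
  have Gnn: "G x \<ge> 0" if "0 \<le> x" for x unfolding G_def by (rule int_nn[OF g that])
  have Fnn: "F x \<ge> 0" if "0 \<le> x" for x unfolding F_def by (rule int_nn[OF f that])
  have g1: "continuous_on {0..1} g" by (rule continuous_on_subset[OF g(1)]) auto
  have f1: "continuous_on {0..1} f" by (rule continuous_on_subset[OF f(1)]) auto
  have G1: "continuous_on {0..1} G"
    unfolding G_def by (intro indefinite_integral_continuous_1 integrable_continuous_real g1)
  have F1: "continuous_on {0..1} F"
    unfolding F_def by (intro indefinite_integral_continuous_1 integrable_continuous_real f1)
  have cG: "continuous_on {0..1} (\<lambda>x. c + G x)" using G1 by (intro continuous_intros)
  have "continuous_on {0..1} (\<lambda>x. Psi w m n (c + G x))"
    by (rule continuous_on_compose2[OF Psi_cont[OF w(1) w(4) mn(1)] cG]) (use Gnn c in force)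
  then have Hc: "continuous_on {0..1} H" unfolding H_def using F1 by (intro continuous_intros)
  have H0: "H 0 = Psi w m n c" unfolding H_def G_def F_def by simp
  have lt: "Psi w m n c < Psi w m n (2*c)" using Psi_strict[OF w(1) w(4) mn(1), of c "2*c"] c by auto
  obtain d where d: "d > 0" "\<forall>x'\<in>{0..1}. dist x' 0 < d \<longrightarrow> dist (H x') (H 0) < Psi w m n (2*c) - Psi w m n c"
    using Hc unfolding continuous_on_iff using lt by (metis atLeastAtMost_iff diff_gt_0_iff_gt order_refl zero_le_one)
  define \<tau> where "\<tau> = min (d/2) 1"
  have \<tau>: "\<tau> > 0" using d by (simp add: \<tau>_def)
  have res: "H (\<alpha> t) \<in> Psi_dom w m n \<and> u t \<le> Psi_inv w m n (H (\<alpha> t)) powr (1 / (m - n))"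
    if t: "t \<in> {0..\<tau>}" for t
  proof -
    define T where "T = \<alpha> t"
    have T: "0 \<le> T" "T \<le> \<tau>" using t \<alpha>(2,4) unfolding T_def by (force, force)
    have "dist T 0 < d" using T d by (simp add: \<tau>_def dist_real_def)
    then have "dist (H T) (H 0) < Psi w m n (2*c) - Psi w m n c" using d T by (auto simp: \<tau>_def)
    then have up: "H T \<le> Psi w m n (2*c)" using H0 by (auto simp: dist_real_def)
    have "Psi w m n c \<le> Psi w m n (c + G T)"
      using Psi_le_iff[OF w(1) w(4) mn(1), of c "c + G T"] Gnn[OF T(1)] c by auto
    then have lo: "Psi w m n c \<le> H T" unfolding H_def using Fnn[OF T(1)] by auto
    have cc: "c \<le> 2*c" using c by auto
    have ic: "\<forall>x. c \<le> x \<and> x \<le> 2 * c \<longrightarrow> isCont (Psi w m n) x"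
    proof (intro allI impI)
      fix x assume "c \<le> x \<and> x \<le> 2 * c"
      then have "x > 0" using c by auto
      then show "isCont (Psi w m n) x" using Psi_deriv[OF w(1) w(4) mn(1)] DERIV_isCont by blast
    qed
    have "\<exists>x0. c \<le> x0 \<and> x0 \<le> 2*c \<and> Psi w m n x0 = H T"
      using IVT[where f="Psi w m n" and a=c and b="2*c" and y="H T", OF lo up cc ic] by blast
    then obtain x0 where x0: "c \<le> x0" "Psi w m n x0 = H T" by blast
    have x0p: "x0 > 0" using x0 c by auto
    have dom: "H T \<in> Psi_dom w m n" unfolding Psi_dom_def using x0 x0p by force
    have inv: "Psi_inv w m n (H T) = x0" using Psi_inv_eq[OF w(1) w(4) mn(1) x0p] x0 by simp
    have "Psi w m n (P T) \<le> Psi w m n x0" using main[OF T(1)] x0 unfolding H_def by simp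
    moreover have PT: "P T > 0" unfolding P_def using vpos[OF T(1)] by simp
    ultimately have Px: "P T \<le> x0" using Psi_le_iff[OF w(1) w(4) mn(1) PT x0p] by simp
    have "u t \<le> v T powr (1/m)" using uva t unfolding T_def by auto
    also have "\<dots> = P T powr (1/(m-n))" unfolding P_def using mpos by (simp add: powr_powr)
    also have "\<dots> \<le> x0 powr (1/(m-n))" using Px PT mpos by (intro powr_mono2) auto
    finally show ?thesis using dom inv unfolding T_def by simp
  qed
  show ?thesis
    using \<tau> res unfolding H_def G_def F_def by blast
qed

end
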